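(* Let $F$ be an algebraically closed field of characteristic $\neq 2$, let $R=F[t]$ with the involution ${}^*$ described in the context, and let $A\in M_2(R)$ satisfy $A^*=A$, $\det(A)\neq 0$ and $\gcd(A)=1$. Then $A$ is congruent to the diagonal matrix $\mathrm{diag}(1,\det(A))$, i.e. there is $S\in \mathrm{GL}_2(R)$ with $S^*AS=\mathrm{diag}(1,\det(A))$.
   Context: $R=F[t]$ is the polynomial ring over $F$, and ${}^*$ is the $F$-algebra involution of $R$ that is the identity on $F$ and sends $t$ to $-t$. For $A=(a_{ij})\in M_n(R)$, $A^*$ is the matrix whose $(i,j)$ entry is $a_{ji}^*$. $A$ is hermitian if $A^*=A$ and skew-hermitian if $A^*=-A$. Two such matrices $A,B$ are congruent if $B=S^*AS$ for some $S\in\mathrm{GL}_n(R)$. For a hermitian or skew-hermitian $A$, $\gcd(A)$ denotes the monic generator (or $0$) of the ideal of $R$ generated by all entries of $A$. *)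

theory Defs
  imports "HOL-Analysis.Analysis" "HOL-Computational_Algebra.Polynomial_Factorial"
begin

text \<open>The involution on F[t]: identity on F, t goes to -t.\<close>
definition pinv :: "'a::comm_ring_1 poly \<Rightarrow> 'a poly" where
  "pinv p = p \<circ>\<^sub>p [:0, -1:]"

definition cstar :: "'a::comm_ring_1 poly ^'n^'n \<Rightarrow> 'a poly ^'n^'n" where
  "cstar A = (\<chi> i j. pinv (A $ j $ i))"

text \<open>gcd(A) = 1: the monic generator of the ideal generated by all entries
  of A is 1, i.e. that ideal is the whole ring (1 is an R-linear combination
  of the entries).\<close>
definition gcd_mat_one :: "'a::comm_ring_1 poly ^'n^'n \<Rightarrow> bool" where
  "gcd_mat_one A \<longleftrightarrow> (\<exists>c :: 'n \<Rightarrow> 'n \<Rightarrow> 'a poly.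
      (\<Sum>i\<in>UNIV. \<Sum>j\<in>UNIV. c i j * A $ i $ j) = 1)"

end

theory Submission
  imports Defs
begin

lemma pinv_0 [simp]: "pinv 0 = 0" by (simp add: pinv_def)
lemma pinv_1 [simp]: "pinv 1 = 1" by (simp add: pinv_def pcompose_1)
lemma pinv_const [simp]: "pinv [:c:] = [:c:]" by (simp add: pinv_def)
lemma pinv_add [simp]: "pinv (p + q) = pinv p + pinv q" by (simp add: pinv_def pcompose_add)
lemma pinv_mult [simp]: "pinv (p * q) = pinv p * pinv q" by (simp add: pinv_def pcompose_mult)
lemma pinv_uminus [simp]: "pinv (- p) = - pinv p" by (simp add: pinv_def pcompose_uminus)
lemma pinv_diff [simp]: "pinv (p - q) = pinv p - pinv q" by (simp add: pinv_def pcompose_diff)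
lemma pinv_smult [simp]: "pinv (smult c p) = smult c (pinv p)" by (simp add: pinv_def pcompose_smult)
lemma pinv_power [simp]: "pinv (p ^ n) = pinv p ^ n" by (induct n) auto
lemma pinv_X [simp]: "pinv [:0, 1:] = - [:0, 1:]" by (simp add: pinv_def pcompose_pCons)
lemma pinv_pinv [simp]: "pinv (pinv (p :: 'a :: comm_ring_1 poly)) = p"
proof -
  have "[:0, -1:] \<circ>\<^sub>p [:0, -1:] = ([:0, 1:] :: 'a poly)"
    by (simp add: pcompose_pCons)
  then show ?thesis by (simp add: pinv_def pcompose_assoc[symmetric])
qed
lemma poly_pinv [simp]: "poly (pinv p) x = poly p (- x)" by (simp add: pinv_def poly_pcompose)
lemma pinv_numeral [simp]: "pinv (numeral n) = numeral n"
  by (induct n) (simp_all only: numeral.simps pinv_add pinv_1)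
lemma degree_pinv [simp]: "degree (pinv (p :: 'a :: idom poly)) = degree p"
  by (simp add: pinv_def degree_pcompose)
lemma pinv_eq_0_iff [simp]: "pinv (p :: 'a :: comm_ring_1 poly) = 0 \<longleftrightarrow> p = 0"
  by (metis pinv_0 pinv_pinv)
lemma pinv_inj: "pinv (p :: 'a :: comm_ring_1 poly) = pinv q \<longleftrightarrow> p = q"
  by (metis pinv_pinv)
lemma pinv_dvd: "p dvd q \<Longrightarrow> pinv p dvd pinv q"
  by (metis dvd_def pinv_mult)
lemma pinv_dvd_iff: "pinv (p :: 'a :: comm_ring_1 poly) dvd pinv q \<longleftrightarrow> p dvd q"
  by (metis pinv_dvd pinv_pinv)

lemma pinv_pCons: "pinv (pCons a p) = [:a:] + [:0, -1:] * pinv p"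
  by (simp add: pinv_def pcompose_pCons)
lemma pinv_pCons2 [simp]: "pinv [:a, b:] = [:a, -b:]"
  by (simp add: pinv_pCons)
lemma pinv_pCons3 [simp]: "pinv [:a, b, c:] = [:a, -b, c:]"
  by (simp add: pinv_pCons)

lemma coprime_pinv: "coprime p q \<Longrightarrow> coprime (pinv (p :: 'a :: field poly)) (pinv q)"
proof (rule coprimeI)
  fix c assume "coprime p q" "c dvd pinv p" "c dvd pinv q"
  then have "pinv c dvd p" "pinv c dvd q" by (metis pinv_dvd pinv_pinv)+
  then have "is_unit (pinv c)" using \<open>coprime p q\<close> coprime_common_divisor by blast
  then show "is_unit c" by (metis pinv_dvd pinv_1 pinv_pinv)
qed

lemma poly_even: "pinv e = e \<Longrightarrow> poly e (- x) = poly e x"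
  by (metis poly_pinv)

subsection \<open>Algebraic closure facts\<close>

lemma sqrt_exists: "\<exists>s::'a::alg_closed_field. s * s = c"
  using nth_root_exists[of 2 c] by (auto simp: power2_eq_square)

lemma quad_root:
  fixes a b c :: "'a::alg_closed_field"
  assumes "a \<noteq> 0 \<or> b \<noteq> 0"
  shows "\<exists>l. a * l * l + b * l + c = 0"
proof (cases "a = 0")
  case True
  then have "b \<noteq> 0" using assms by auto
  then show ?thesis using True by (intro exI[of _ "- c / b"]) (simp add: field_simps)
next
  case False
  then have "degree [:c, b, a:] > 0" by simp
  then obtain l where "poly [:c, b, a:] l = 0" using alg_closed_imp_poly_has_root by blast
  then show ?thesis by (intro exI[of _ l]) (simp add: algebra_simps)
qed

lemma infinite_alg_closed: "infinite (UNIV :: 'a::alg_closed_field set)"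
proof
  assume fin: "finite (UNIV :: 'a set)"
  define p :: "'a poly" where "p = (\<Prod>a\<in>UNIV. [:- a, 1:])"
  have "degree p = card (UNIV :: 'a set)"
    unfolding p_def by (subst degree_prod_eq_sum_degree) auto
  moreover have "card (UNIV :: 'a set) > 0" using fin by (simp add: card_gt_0_iff)
  ultimately have "degree (p + 1) > 0" by (simp add: degree_add_eq_left)
  then obtain x where "poly (p + 1) x = 0" using alg_closed_imp_poly_has_root by blast
  moreover have "poly p x = 0" unfolding p_def poly_prod
    using fin by (intro prod_zero) auto
  ultimately show False by simp
qed

lemma coprime_root: "coprime p q \<Longrightarrow> poly p r = 0 \<Longrightarrow> poly (q :: 'a :: field poly) r \<noteq> 0"
proof
  assume "coprime p q" "poly p r = 0" "poly q r = 0"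
  then have "[:-r, 1:] dvd p" "[:-r, 1:] dvd q" by (simp_all add: poly_eq_0_iff_dvd)
  then have "is_unit [:-r, 1:]" using \<open>coprime p q\<close> coprime_common_divisor by blast
  then show False by (simp add: is_unit_iff_degree)
qed

lemma coprime_by_roots:
  fixes p q :: "'a::alg_closed_field poly"
  assumes "\<And>r. poly p r = 0 \<Longrightarrow> poly q r \<noteq> 0"
  shows "coprime p q"
proof (rule coprimeI)
  fix c assume c: "c dvd p" "c dvd q"
  show "is_unit c"
  proof (cases "c = 0")
    case True
    then have "p = 0" "q = 0" using c by auto
    then show ?thesis using assms[of 0] by simp
  next
    case False
    show ?thesis
    proof (rule ccontr)
      assume "\<not> is_unit c"
      then have "degree c \<noteq> 0" using False by (simp add: is_unit_iff_degree)
      then obtain r where r: "poly c r = 0" using alg_closed_imp_poly_has_root by blast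
      then have "poly p r = 0" "poly q r = 0" using c by (auto elim!: dvdE)
      then show False using assms by blast
    qed
  qed
qed

lemma ideal_gen:
  fixes a b :: "'a::field poly"
  assumes "a \<noteq> 0 \<or> b \<noteq> 0"
  shows "\<exists>g u w. g = u * a + w * b \<and> g dvd a \<and> g dvd b \<and> g \<noteq> 0"
proof -
  define P where "P = (\<lambda>n. \<exists>u w. u * a + w * b \<noteq> 0 \<and> degree (u * a + w * b) = n)"
  have "\<exists>n. P n"
  proof (cases "a = 0")
    case True
    then have "0 * a + 1 * b \<noteq> 0" using assms by simp
    then show ?thesis unfolding P_def by blast
  next
    case False
    then have "1 * a + 0 * b \<noteq> 0" by simp
    then show ?thesis unfolding P_def by blast
  qed
  define n where "n = (LEAST n. P n)"
  have n: "P n" unfolding n_def using \<open>\<exists>n. P n\<close> by (rule LeastI_ex)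
  have nmin: "n \<le> degree (u' * a + w' * b)" if "u' * a + w' * b \<noteq> 0" for u' w'
  proof -
    have "P (degree (u' * a + w' * b))" unfolding P_def using that by blast
    then show ?thesis unfolding n_def by (rule Least_le)
  qed
  obtain u w where uw: "u * a + w * b \<noteq> 0" "degree (u * a + w * b) = n"
    using n unfolding P_def by blast
  define g where "g = u * a + w * b"
  have "g dvd x" if x: "x = a \<or> x = b" for x
  proof (rule ccontr)
    assume nd: "\<not> g dvd x"
    then have m0: "x mod g \<noteq> 0" by (simp add: dvd_eq_mod_eq_0)
    define u' where "u' = (if x = a then 1 - (x div g) * u else - (x div g) * u)"
    define w' where "w' = (if x = a then - (x div g) * w else 1 - (x div g) * w)"
    have "x mod g = x - (x div g) * g" by (simp add: minus_div_mult_eq_mod)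
    also have "\<dots> = u' * a + w' * b"
      using x by (auto simp: g_def u'_def w'_def algebra_simps)
    finally have eq: "x mod g = u' * a + w' * b" .
    have "n \<le> degree (x mod g)" unfolding eq by (rule nmin) (use m0 eq in simp)
    moreover have "degree (x mod g) < degree g" using m0 uw(1) g_def degree_mod_less' by blast
    ultimately show False using uw(2) g_def by simp
  qed
  then show ?thesis using uw(1) g_def by blast
qed

lemma bezout_coprime:
  fixes a b :: "'a::field poly"
  assumes "coprime a b"
  shows "\<exists>u w. u * a + w * b = 1"
proof -
  have "a \<noteq> 0 \<or> b \<noteq> 0" using assms by auto
  then obtain g u w where g: "g = u * a + w * b" "g dvd a" "g dvd b" "g \<noteq> 0"
    using ideal_gen by blast
  have "is_unit g" using assms g coprime_common_divisor by blast
  then obtain c where c0: "g = [:c:]" by (auto simp: is_unit_poly_iff)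
  then have c: "g = [:c:]" "c \<noteq> 0" using g(4) by auto
  have "smult (inverse c) g = 1" using c by simp
  then have "smult (inverse c) u * a + smult (inverse c) w * b = 1"
    using g(1) by (simp add: smult_add_right)
  then show ?thesis by blast
qed

subsection \<open>Even polynomials\<close>

lemma even_root_dvd:
  fixes e :: "'a::field poly"
  assumes two: "(2::'a) \<noteq> 0" and ev: "pinv e = e" and r: "poly e r = 0"
  shows "[:-(r*r), 0, 1:] dvd e"
proof (cases "r = 0")
  case False
  have "[:-r, 1:] dvd e" using r by (simp add: poly_eq_0_iff_dvd)
  then obtain q where q: "e = [:-r, 1:] * q" by (elim dvdE)
  have "poly e (- r) = 0" using r poly_even[OF ev, of r] by simp
  then have pq: "(- r - r) * poly q (- r) = 0" unfolding q by simp
  have "- r - r = - (2 * r)" by simp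
  moreover have "2 * r \<noteq> 0" using two False by simp
  ultimately have "- r - r \<noteq> 0" by simp
  with pq have "poly q (- r) = 0" by simp
  then have "[:r, 1:] dvd q" by (simp add: dvd_iff_poly_eq_0)
  then have "[:-r, 1:] * [:r, 1:] dvd e" unfolding q by (rule mult_dvd_mono[OF dvd_refl])
  moreover have "[:-r, 1:] * [:r, 1:] = [:-(r*r), 0, 1:]" by simp
  ultimately show ?thesis by simp
next
  case True
  then have "[:0, 1:] dvd e" using r by (simp add: poly_eq_0_iff_dvd)
  then obtain q where q: "e = [:0, 1:] * q" by (elim dvdE)
  have "pinv ([:0, 1:] * q) = [:0, 1:] * q" using ev unfolding q .
  then have "[:0, 1:] * (- pinv q) = [:0, 1:] * q"
    by (simp only: pinv_mult pinv_X mult_minus_left mult_minus_right)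
  moreover have nz: "[:0, 1:] \<noteq> (0 :: 'a poly)" by simp
  ultimately have "- pinv q = q" by simp
  then have pq: "pinv q = - q" by (metis minus_minus)
  have "poly q 0 = poly (pinv q) 0" by simp
  also have "\<dots> = - poly q 0" unfolding pq by simp
  finally have "poly q 0 = - poly q 0" .
  then have "poly q 0 + poly q 0 = 0" by (subst (asm) eq_neg_iff_add_eq_0)
  then have "2 * poly q 0 = 0" by (simp only: mult_2)
  then have "poly q 0 = 0" using two by simp
  then have "[:0, 1:] dvd q" by (simp add: poly_eq_0_iff_dvd)
  then have "[:0, 1:] * [:0, 1:] dvd e" unfolding q by (rule mult_dvd_mono[OF dvd_refl])
  then show ?thesis using True by simp
qed

lemma even_quot:
  assumes "pinv q = q" "q \<noteq> 0" "pinv e = e" "e = q * (e' :: 'a :: idom poly)"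
  shows "pinv e' = e'"
proof -
  have "q * pinv e' = pinv q * pinv e'" using assms(1) by simp
  also have "\<dots> = pinv e" using assms(4) by simp
  also have "\<dots> = q * e'" using assms(3,4) by simp
  finally have "q * pinv e' = q * e'" .
  then show ?thesis using assms(2) by simp
qed

lemma even_factor:
  fixes e :: "'a::alg_closed_field poly"
  assumes two: "(2::'a) \<noteq> 0" and ev: "pinv e = e" and deg: "degree e > 0"
  shows "\<exists>r e'. e = [:-(r*r), 0, 1:] * e' \<and> pinv e' = e' \<and> degree e' < degree e"
proof -
  obtain r where r: "poly e r = 0" using deg alg_closed_imp_poly_has_root by blast
  define q :: "'a poly" where "q = [:-(r*r), 0, 1:]"
  have "q dvd e" unfolding q_def by (rule even_root_dvd[OF two ev r])
  then obtain e' where e': "e = q * e'" by (elim dvdE)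
  have "e \<noteq> 0" using deg by auto
  then have e0: "e' \<noteq> 0" using e' by auto
  have q0: "q \<noteq> 0" and qe: "pinv q = q" and dq: "degree q = 2" by (simp_all add: q_def)
  have "pinv e' = e'" by (rule even_quot[OF qe q0 ev e'])
  moreover have "degree e = degree q + degree e'"
    unfolding e' using q0 e0 by (rule degree_mult_eq)
  ultimately have "pinv e' = e' \<and> degree e' < degree e" using dq by simp
  then show ?thesis using e' unfolding q_def by blast
qed

lemma norm_surj:
  fixes e :: "'a::alg_closed_field poly"
  assumes two: "(2::'a) \<noteq> 0" and ev: "pinv e = e"
  shows "\<exists>h. e = h * pinv h"
  using ev
proof (induction "degree e" arbitrary: e rule: less_induct)
  case (less e)
  show ?case
  proof (cases "degree e = 0")
    case True
    then obtain c where c: "e = [:c:]" by (elim degree_eq_zeroE)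
    obtain s where "s * s = c" using sqrt_exists by blast
    then show ?thesis using c by (intro exI[of _ "[:s:]"]) simp
  next
    case False
    then obtain r e' where re: "e = [:-(r*r), 0, 1:] * e'" "pinv e' = e'" "degree e' < degree e"
      using even_factor[OF two less.prems] by blast
    obtain h' where h': "e' = h' * pinv h'" using less.hyps[OF re(3) re(2)] by blast
    obtain i :: 'a where i: "i * i = -1" using sqrt_exists by blast
    define H where "H = [:-(i*r), i:]"
    have HH: "H * pinv H = [:-(r*r), 0, 1:]"
    proof -
      have "H * pinv H = [:(i*i)*(r*r), 0, -(i*i):]" by (simp add: H_def algebra_simps)
      then show ?thesis using i by simp
    qed
    have "(H * h') * pinv (H * h') = (H * pinv H) * (h' * pinv h')" by (simp add: mult_ac)
    also have "\<dots> = e" using HH re(1) h' by simp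
    finally show ?thesis by metis
  qed
qed

lemma coprime_from_bezout:
  fixes a b :: "'a::{comm_ring_1,algebraic_semidom}"
  assumes "u * a + w * b = 1"
  shows "coprime a b"
proof (rule coprimeI)
  fix k assume "k dvd a" "k dvd b"
  then have "k dvd u * a + w * b" by simp
  then show "is_unit k" using assms by simp
qed

lemma coprime_mult2:
  fixes a b c :: "'a::field poly"
  assumes "coprime a b" "coprime a c"
  shows "coprime a (b * c)"
proof -
  obtain u1 v1 where 1: "u1 * a + v1 * b = 1" using bezout_coprime[OF assms(1)] by blast
  obtain u2 v2 where 2: "u2 * a + v2 * c = 1" using bezout_coprime[OF assms(2)] by blast
  have "(u1 * a + v1 * b) * (u2 * a + v2 * c) = 1" using 1 2 by simp
  then have "(u1 * u2 * a + u1 * v2 * c + v1 * b * u2) * a + (v1 * v2) * (b * c) = 1"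
    by (simp add: algebra_simps)
  then show ?thesis by (rule coprime_from_bezout)
qed

lemma root_nonzero:
  fixes M d y :: "'a::field poly"
  assumes "M dvd d * y * y - 1" "poly M r = 0"
  shows "poly y r \<noteq> 0"
proof
  assume y: "poly y r = 0"
  obtain k where k: "d * y * y - 1 = M * k" using assms(1) by (elim dvdE)
  have "poly (d * y * y - 1) r = poly M r * poly k r" by (simp only: k poly_mult)
  then show False using y assms(2) by simp
qed

lemma hensel:
  fixes M d :: "'a::alg_closed_field poly"
  assumes two: "(2::'a) \<noteq> 0" and "pinv M = M" "M \<noteq> 0" "pinv d = d" "coprime d M"
  shows "\<exists>w. pinv w = w \<and> M dvd d * w * w - 1"
  using assms(2-5)
proof (induction "degree M" arbitrary: M rule: less_induct)
  case (less M)
  show ?case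
  proof (cases "degree M = 0")
    case True
    then have "is_unit M" using less.prems(2) by (simp add: is_unit_iff_degree)
    then have "M dvd d * 0 * 0 - 1" by (rule unit_imp_dvd)
    moreover have "pinv 0 = (0 :: 'a poly)" by simp
    ultimately show ?thesis by blast
  next
    case False
    then obtain r M' where rM: "M = [:-(r*r), 0, 1:] * M'" "pinv M' = M'" "degree M' < degree M"
      using even_factor[OF two less.prems(1)] by blast
    define q :: "'a poly" where "q = [:-(r*r), 0, 1:]"
    have Mq: "M = q * M'" using rM(1) by (simp add: q_def)
    have M'0: "M' \<noteq> 0" using Mq less.prems(2) by auto
    have cop': "coprime d M'" using less.prems(4) Mq by (metis coprime_divisors dvd_refl dvd_triv_right)
    obtain w' where w': "pinv w' = w'" "M' dvd d * w' * w' - 1"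
      using less.hyps[OF rM(3) rM(2) M'0 less.prems(3) cop'] by blast
    obtain R where R: "d * w' * w' - 1 = M' * R" using w'(2) by (elim dvdE)
    have "pinv (d * w' * w' - 1) = d * w' * w' - 1" using less.prems(3) w'(1) by simp
    then have Re: "pinv R = R" by (rule even_quot[OF rM(2) M'0 _ R])
    have Mr: "poly M r = 0" by (simp add: Mq q_def)
    have cMd: "coprime M d" using less.prems(4) by (simp add: coprime_commute)
    have dr: "poly d r \<noteq> 0" by (rule coprime_root[OF cMd Mr])
    have Rr: "poly d r * poly w' r * poly w' r - 1 = poly M' r * poly R r"
    proof -
      have "poly (d * w' * w' - 1) r = poly (M' * R) r" by (simp only: R)
      then show ?thesis by simp
    qed
    have AB: "poly d r * poly M' r \<noteq> 0 \<or> 2 * poly d r * poly w' r \<noteq> 0"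
    proof (cases "poly M' r = 0")
      case True
      then have "poly d r * poly w' r * poly w' r - 1 = 0" using Rr by simp
      then have "poly w' r \<noteq> 0" by auto
      then show ?thesis using two dr by simp
    next
      case False
      then show ?thesis using dr by simp
    qed
    obtain l where l: "(poly d r * poly M' r) * l * l + (2 * poly d r * poly w' r) * l + poly R r = 0"
      using quad_root[OF AB] by blast
    define L :: "'a poly" where "L = [:l:]"
    define E where "E = R + L * (2 * d * w') + L * L * (d * M')"
    have Ee: "pinv E = E" using Re less.prems(3) w'(1) rM(2) by (simp add: E_def L_def)
    have "poly E r = (poly d r * poly M' r) * l * l + (2 * poly d r * poly w' r) * l + poly R r"
      by (simp add: E_def L_def algebra_simps)
    then have "poly E r = 0" using l by simp
    then have "q dvd E" unfolding q_def by (rule even_root_dvd[OF two Ee])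
    define w where "w = w' + L * M'"
    have we: "pinv w = w" using w'(1) rM(2) by (simp add: w_def L_def)
    have "d * w * w - 1 = (d * w' * w' - 1) + M' * (L * (2 * d * w') + L * L * (d * M'))"
      unfolding w_def by algebra
    also have "\<dots> = M' * E" unfolding R E_def by algebra
    finally have "d * w * w - 1 = E * M'" by (simp add: mult.commute)
    moreover have "q * M' dvd E * M'" using \<open>q dvd E\<close> by (rule mult_dvd_mono) simp
    ultimately have "M dvd d * w * w - 1" using Mq by simp
    then show ?thesis using we by blast
  qed
qed

lemma lemH:
  fixes b d u w z :: "'a::alg_closed_field poly"
  assumes two: "(2::'a) \<noteq> 0" and b0: "b \<noteq> 0" and de: "pinv d = d"
    and gen: "u * b + w * pinv b + z * d = 1"
  shows "\<exists>x y. pinv x * b * y + pinv y * pinv b * x + pinv y * d * y = 1"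
proof -
  obtain g u0 w0 where g: "g = u0 * b + w0 * pinv b" "g dvd b" "g dvd pinv b" "g \<noteq> 0"
    using ideal_gen[of b "pinv b"] b0 by blast
  have pg1: "pinv g dvd b" using pinv_dvd[OF g(3)] by simp
  have pg2: "pinv g dvd pinv b" using pinv_dvd[OF g(2)] .
  have cop_gen: "coprime d c" if c: "c dvd b" "c dvd pinv b" for c
  proof (rule coprimeI)
    fix k assume k: "k dvd d" "k dvd c"
    then have "k dvd b" "k dvd pinv b" using c by (auto intro: dvd_trans)
    then have "k dvd u * b + w * pinv b + z * d" using k by simp
    then show "is_unit k" using gen by simp
  qed
  define M where "M = g * pinv g"
  have Me: "pinv M = M" by (simp add: M_def mult.commute)
  have M0: "M \<noteq> 0" using g(4) by (simp add: M_def)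
  have copM: "coprime d M" unfolding M_def
    by (rule coprime_mult2[OF cop_gen[OF g(2,3)] cop_gen[OF pg1 pg2]])
  obtain y1 where y1: "pinv y1 = y1" "M dvd d * y1 * y1 - 1" using hensel[OF two Me M0 de copM] by blast
  obtain y0 where y0: "pinv y0 = y0" "M dvd d * y0 * y0 - 1" "poly y0 0 \<noteq> 0"
  proof (cases "poly y1 0 = 0")
    case False
    then show ?thesis using that y1 by blast
  next
    case True
    have M0r: "poly M 0 \<noteq> 0" using root_nonzero[OF y1(2), of 0] True by blast
    define y2 where "y2 = y1 + M * M"
    have "pinv y2 = y2" using y1(1) Me by (simp add: y2_def)
    moreover have "d * y2 * y2 - 1 = (d * y1 * y1 - 1) + M * (d * (2 * y1 * M + M * M * M))"
      unfolding y2_def by algebra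
    then have "M dvd d * y2 * y2 - 1" using y1(2) by (metis dvd_add dvd_triv_left)
    moreover have "poly y2 0 \<noteq> 0" using True M0r by (simp add: y2_def)
    ultimately show ?thesis using that by blast
  qed
  have F1: "poly y0 r \<noteq> 0" if "poly M r = 0" for r using root_nonzero[OF y0(2) that] .
  have key: "poly y0 r \<noteq> 0" if "r * poly M r = 0" for r
    using that F1 y0(3) by auto
  define Bd where "Bd = insert 0 ((\<lambda>r. - poly y0 r / (r * poly M r)) ` {r. poly (pinv b) r = 0})"
  have "finite Bd" using poly_roots_finite[of "pinv b"] b0 by (simp add: Bd_def)
  then obtain mu where mu: "mu \<notin> Bd" using ex_new_if_finite[OF infinite_alg_closed] by blast
  have mu0: "mu \<noteq> 0" using mu by (simp add: Bd_def)
  define X :: "'a poly" where "X = [:0, 1:]"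
  define y where "y = y0 + [:mu:] * X * M"
  have pinv_y: "pinv y = y0 - [:mu:] * X * M"
  proof -
    have "pinv y = y0 + [:mu:] * (- X) * M" unfolding y_def X_def
      by (simp only: pinv_add pinv_mult pinv_const y0(1) Me pinv_X)
    then show ?thesis by simp
  qed
  have poly_y: "poly y r = poly y0 r + mu * (r * poly M r)" for r by (simp add: y_def X_def)
  have poly_py: "poly (pinv y) r = poly y0 r - mu * (r * poly M r)" for r
    by (simp add: pinv_y X_def)
  have cop1: "coprime (pinv b) y"
  proof (rule coprime_by_roots)
    fix r assume r: "poly (pinv b) r = 0"
    show "poly y r \<noteq> 0"
    proof (cases "r * poly M r = 0")
      case True
      note rm = this
      have "poly y r = poly y0 r" using poly_y[of r, unfolded rm] by simp
      then show ?thesis using key[OF rm] by simp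
    next
      case False
      show ?thesis
      proof
        assume "poly y r = 0"
        then have "poly y0 r + mu * (r * poly M r) = 0" using poly_y by simp
        then have "mu = - poly y0 r / (r * poly M r)" using False
          by (simp add: field_simps add_eq_0_iff)
        then have "mu \<in> Bd" using r by (auto simp: Bd_def)
        then show False using mu by simp
      qed
    qed
  qed
  have cop2: "coprime y (pinv y)"
  proof (rule coprime_by_roots)
    fix r assume r: "poly y r = 0"
    show "poly (pinv y) r \<noteq> 0"
    proof
      assume r2: "poly (pinv y) r = 0"
      have s1: "poly y0 r + mu * (r * poly M r) = 0" using r unfolding poly_y .
      have s2: "poly y0 r - mu * (r * poly M r) = 0" using r2 unfolding poly_py .
      have "(poly y0 r + mu * (r * poly M r)) + (poly y0 r - mu * (r * poly M r)) = 2 * poly y0 r"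
        by algebra
      then have "2 * poly y0 r = 0" unfolding s1 s2 by simp
      then have y0r: "poly y0 r = 0" using two by simp
      have "mu * (r * poly M r) = 0" using s1 unfolding y0r by simp
      then have "r * poly M r = 0" using mu0 by simp
      then show False using key y0r by blast
    qed
  qed
  obtain b1 where b1: "b = g * b1" using g(2) by (elim dvdE)
  obtain b2 where b2: "pinv b = g * b2" using g(3) by (elim dvdE)
  have "g = u0 * (g * b1) + w0 * (g * b2)" unfolding b1[symmetric] b2[symmetric] by (rule g(1))
  then have "g * (u0 * b1 + w0 * b2) = g * 1" by (simp add: algebra_simps)
  then have "u0 * b1 + w0 * b2 = 1" using g(4) mult_left_cancel by blast
  then have cop12: "coprime b1 b2" by (rule coprime_from_bezout)
  have "coprime (pinv (pinv b)) (pinv y)" using coprime_pinv[OF cop1] .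
  then have "coprime b (pinv y)" by simp
  then have cop_a: "coprime b1 (pinv y)"
    by (rule coprime_divisors[OF _ dvd_refl, rotated]) (simp add: b1)
  have "coprime y (pinv b)" using cop1 by (simp add: coprime_commute)
  then have cop_b: "coprime y b2"
    by (rule coprime_divisors[OF dvd_refl, rotated]) (simp add: b2)
  have cop_all: "coprime (b1 * y) (b2 * pinv y)"
  proof -
    have "coprime b1 (b2 * pinv y)" by (rule coprime_mult2[OF cop12 cop_a])
    moreover have "coprime y (b2 * pinv y)" by (rule coprime_mult2[OF cop_b cop2])
    ultimately have "coprime (b2 * pinv y) b1" "coprime (b2 * pinv y) y"
      by (simp_all add: coprime_commute)
    then have "coprime (b2 * pinv y) (b1 * y)" by (rule coprime_mult2)
    then show ?thesis by (simp add: coprime_commute)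
  qed
  obtain U W where UW: "U * (b1 * y) + W * (b2 * pinv y) = 1" using bezout_coprime[OF cop_all] by blast
  have gUW: "U * (b * y) + W * (pinv b * pinv y) = g"
  proof -
    have "U * (b * y) + W * (pinv b * pinv y) = U * ((g * b1) * y) + W * ((g * b2) * pinv y)"
      by (simp only: b1[symmetric] b2[symmetric])
    also have "\<dots> = g * (U * (b1 * y) + W * (b2 * pinv y))" by (simp add: algebra_simps)
    also have "\<dots> = g" using UW by simp
    finally show ?thesis .
  qed
  define N where "N = y * pinv y"
  have NE: "pinv N = N" by (simp add: N_def mult.commute)
  have Nform: "N = y0 * y0 - [:mu:] * [:mu:] * X * X * M * M"
    unfolding N_def pinv_y unfolding y_def by algebra
  define e where "e = 1 - d * N"
  have "e = - (d * y0 * y0 - 1) + M * (d * [:mu:] * [:mu:] * X * X * M)"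
    unfolding e_def Nform by algebra
  then have "M dvd e" using y0(2) by (metis dvd_add dvd_minus_iff dvd_triv_left)
  then have "g dvd e" unfolding M_def by (metis dvd_mult_left)
  then obtain E where E: "e = g * E" by (elim dvdE)
  have ee: "pinv e = e" by (simp add: e_def de NE)
  define P where "P = b * y"
  have eP: "e = E * U * P + E * W * pinv P"
  proof -
    have "e = E * (U * (b * y) + W * (pinv b * pinv y))" using E gUW by (simp add: mult.commute)
    also have "\<dots> = E * U * P + E * W * pinv P" by (simp add: P_def algebra_simps)
    finally show ?thesis .
  qed
  define K where "K = E * U + pinv (E * W)"
  have PK: "P * K + pinv (P * K) = e + e"
  proof -
    have "P * K + pinv (P * K) = (E * U * P + E * W * pinv P) + pinv (E * U * P + E * W * pinv P)"
      by (simp add: K_def algebra_simps)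
    also have "\<dots> = e + pinv e" by (simp only: eP[symmetric])
    also have "\<dots> = e + e" by (simp only: ee)
    finally show ?thesis .
  qed
  define x where "x = pinv (smult (inverse 2) K)"
  have "pinv x * b * y + pinv y * pinv b * x = smult (inverse 2) (P * K + pinv (P * K))"
    by (simp add: x_def P_def algebra_simps smult_add_right)
  also have "\<dots> = smult (inverse 2) (e + e)" by (simp only: PK)
  also have "\<dots> = e"
  proof -
    have "smult (1 + 1) e = e + e" by (simp only: smult_add_left) simp
    then have "e + e = smult 2 e" by (simp only: one_add_one)
    then show ?thesis using two by simp
  qed
  finally have "pinv x * b * y + pinv y * pinv b * x + pinv y * d * y = e + d * N"
    by (simp add: N_def algebra_simps)
  also have "\<dots> = 1" by (simp add: e_def)
  finally show ?thesis by blast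
qed

subsection \<open>2x2 matrices\<close>

lemma one_neq_two_2 [simp]: "(1::2) \<noteq> 2" "(2::2) \<noteq> 1"
  by (simp_all add: exhaust_2)

lemma mat2_eq: "(A::'b^2^2) = B \<longleftrightarrow> A$1$1 = B$1$1 \<and> A$1$2 = B$1$2 \<and> A$2$1 = B$2$1 \<and> A$2$2 = B$2$2"
  by (auto simp: vec_eq_iff forall_2)

lemma mult_entries [simp]:
  "((A::'b::semiring_1^2^2) ** B)$i$j = A$i$1 * B$1$j + A$i$2 * B$2$j"
  by (simp add: matrix_matrix_mult_def sum_2)

lemma cstar_entry [simp]: "(cstar A)$i$j = pinv (A$j$i)"
  by (simp add: cstar_def)

definition mk2 :: "'b::zero \<Rightarrow> 'b \<Rightarrow> 'b \<Rightarrow> 'b \<Rightarrow> 'b^2^2" where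
  "mk2 p q r s = vector [vector [p, q], vector [r, s]]"

lemma mk2_entries [simp]:
  "(mk2 p q r s)$1$1 = p" "(mk2 p q r s)$1$2 = q" "(mk2 p q r s)$2$1 = r" "(mk2 p q r s)$2$2 = s"
  by (simp_all add: mk2_def)

lemma mat1_entries [simp]:
  "(mat 1 :: 'b::{zero,one}^2^2)$1$1 = 1" "(mat 1 :: 'b^2^2)$1$2 = 0"
  "(mat 1 :: 'b^2^2)$2$1 = 0" "(mat 1 :: 'b^2^2)$2$2 = 1"
  by (simp_all add: mat_def)

definition hq :: "'a::comm_ring_1 poly^2^2 \<Rightarrow> 'a poly \<Rightarrow> 'a poly \<Rightarrow> 'a poly" where
  "hq A x y = pinv x * A$1$1 * x + pinv x * A$1$2 * y + pinv y * A$2$1 * x + pinv y * A$2$2 * y"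

lemma congr_hq:
  "hq (cstar S ** A ** S) x y = hq A (S$1$1 * x + S$1$2 * y) (S$2$1 * x + S$2$2 * y)"
  by (simp add: hq_def algebra_simps)

lemma congr_11: "(cstar S ** A ** S)$1$1 = hq A (S$1$1) (S$2$1)"
  by (simp add: hq_def algebra_simps)

lemma cstar_mult: "cstar ((A::'a::comm_ring_1 poly^2^2) ** B) = cstar B ** cstar A"
  by (simp add: vec_eq_iff mult.commute)

lemma cstar_cstar [simp]: "cstar (cstar (A::'a::comm_ring_1 poly^2^2)) = A"
  by (simp add: vec_eq_iff)

lemma cstar_mat1 [simp]: "cstar (mat 1 :: 'a::comm_ring_1 poly^2^2) = mat 1"
  by (simp add: mat2_eq)

lemma det_cstar: "det (cstar (A::'a::comm_ring_1 poly^2^2)) = pinv (det A)"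
  by (simp add: det_2 mult.commute)

definition adj2 :: "'b::comm_ring_1^2^2 \<Rightarrow> 'b^2^2" where
  "adj2 S = mk2 (S$2$2) (- S$1$2) (- S$2$1) (S$1$1)"

lemma adj2_inv:
  assumes "det (S::'b::comm_ring_1^2^2) = 1"
  shows "S ** adj2 S = mat 1" "adj2 S ** S = mat 1"
  using assms by (simp_all add: mat2_eq adj2_def det_2 algebra_simps)

lemma det1_invertible: "det (S::'b::comm_ring_1^2^2) = 1 \<Longrightarrow> invertible S"
  unfolding invertible_def using adj2_inv by blast

lemma herm_congr:
  assumes "cstar A = (A::'a::comm_ring_1 poly^2^2)"
  shows "cstar (cstar S ** A ** S) = cstar S ** A ** S"
  using assms by (simp add: cstar_mult matrix_mul_assoc)

lemma det_congr:
  assumes "det (S::'a::comm_ring_1 poly^2^2) = 1"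
  shows "det (cstar S ** A ** S) = det A"
  using assms by (simp add: det_mul det_cstar)

definition comb :: "'a::comm_ring_1 poly^2^2 \<Rightarrow> 'a poly \<Rightarrow> bool" where
  "comb B p \<longleftrightarrow> (\<exists>c. (\<Sum>k\<in>UNIV. \<Sum>l\<in>UNIV. c k l * B $ k $ l) = p)"

lemma comb_entry: "comb B (B$k0$l0)"
proof -
  define c where "c = (\<lambda>k l. if k = k0 \<and> l = l0 then 1 else (0::'a poly))"
  have "(\<Sum>k\<in>UNIV. \<Sum>l\<in>UNIV. c k l * B $ k $ l) = B$k0$l0"
    using exhaust_2[of k0] exhaust_2[of l0] by (auto simp: c_def sum_2)
  then show ?thesis unfolding comb_def by blast
qed

lemma comb_add: "comb B p \<Longrightarrow> comb B q \<Longrightarrow> comb B (p + q)"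
proof -
  assume "comb B p" "comb B q"
  then obtain c1 c2 where c1: "(\<Sum>k\<in>UNIV. \<Sum>l\<in>UNIV. c1 k l * B $ k $ l) = p"
    and c2: "(\<Sum>k\<in>UNIV. \<Sum>l\<in>UNIV. c2 k l * B $ k $ l) = q" unfolding comb_def by blast
  have "(\<Sum>k\<in>UNIV. \<Sum>l\<in>UNIV. (c1 k l + c2 k l) * B $ k $ l) = p + q"
    unfolding c1[symmetric] c2[symmetric] by (simp add: distrib_right sum.distrib)
  then show ?thesis unfolding comb_def by (intro exI[of _ "\<lambda>k l. c1 k l + c2 k l"]) simp
qed

lemma comb_mult: "comb B p \<Longrightarrow> comb B (r * p)"
proof -
  assume "comb B p"
  then obtain c1 where c1: "(\<Sum>k\<in>UNIV. \<Sum>l\<in>UNIV. c1 k l * B $ k $ l) = p"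
    unfolding comb_def by blast
  have "(\<Sum>k\<in>UNIV. \<Sum>l\<in>UNIV. (r * c1 k l) * B $ k $ l) = r * p"
    unfolding c1[symmetric] by (simp add: sum_distrib_left mult.assoc)
  then show ?thesis unfolding comb_def by (intro exI[of _ "\<lambda>k l. r * c1 k l"]) simp
qed

lemma comb_mult_r: "comb B p \<Longrightarrow> comb B (p * r)"
  using comb_mult[of B p r] by (simp add: mult.commute)

lemma gcd_transfer:
  assumes "gcd_mat_one (cstar T ** B ** (T::'a::comm_ring_1 poly^2^2))"
  shows "gcd_mat_one B"
proof -
  define A where "A = cstar T ** B ** T"
  obtain c where c: "(\<Sum>i\<in>UNIV. \<Sum>j\<in>UNIV. c i j * A $ i $ j) = 1"
    using assms unfolding gcd_mat_one_def A_def by blast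
  have ent: "comb B (A$i$j)" for i j
    unfolding A_def mult_entries cstar_entry
    by (intro comb_add comb_mult comb_mult_r comb_entry)
  have "comb B (\<Sum>i\<in>UNIV. \<Sum>j\<in>UNIV. c i j * A $ i $ j)"
    unfolding sum_2 by (intro comb_add comb_mult ent)
  then show ?thesis unfolding c gcd_mat_one_def comb_def .
qed

lemma gcd_congr:
  assumes "gcd_mat_one A" "det (S::'a::comm_ring_1 poly^2^2) = 1"
  shows "gcd_mat_one (cstar S ** A ** S)"
proof -
  define T where "T = adj2 S"
  have "cstar T ** (cstar S ** A ** S) ** T = cstar (S ** T) ** A ** (S ** T)"
    by (simp add: cstar_mult matrix_mul_assoc)
  also have "\<dots> = A" using adj2_inv(1)[OF assms(2)] by (simp add: T_def)
  finally show ?thesis using gcd_transfer assms(1) by metis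
qed

lemma herm_entries:
  assumes "cstar A = (A::'a::comm_ring_1 poly^2^2)"
  shows "A$2$1 = pinv (A$1$2)" "pinv (A$1$1) = A$1$1" "pinv (A$2$2) = A$2$2"
proof -
  have "(cstar A)$2$1 = A$2$1" "(cstar A)$1$1 = A$1$1" "(cstar A)$2$2 = A$2$2"
    using assms by simp_all
  then show "A$2$1 = pinv (A$1$2)" "pinv (A$1$1) = A$1$1" "pinv (A$2$2) = A$2$2"
    by simp_all
qed

lemma gcd_2:
  assumes "gcd_mat_one (A::'a::comm_ring_1 poly^2^2)"
  obtains c11 c12 c21 c22 where "c11 * A$1$1 + c12 * A$1$2 + c21 * A$2$1 + c22 * A$2$2 = 1"
proof -
  obtain c :: "2 \<Rightarrow> 2 \<Rightarrow> 'a poly" where c: "(c 1 1 * A$1$1 + c 1 2 * A$1$2) + (c 2 1 * A$2$1 + c 2 2 * A$2$2) = 1"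
    using assms unfolding gcd_mat_one_def sum_2 by blast
  show ?thesis using c that[of "c 1 1" "c 1 2" "c 2 1" "c 2 2"] by (simp only: add.assoc)
qed

lemma rep0:
  fixes A :: "'a::alg_closed_field poly ^ 2 ^ 2"
  assumes two: "(2::'a) \<noteq> 0" and h: "cstar A = A" and dA: "det A \<noteq> 0"
    and g: "gcd_mat_one A" and a0: "A$1$1 = 0"
  shows "\<exists>x y. hq A x y = 1"
proof -
  note he = herm_entries[OF h]
  obtain c11 c12 c21 c22 where c: "c11 * A$1$1 + c12 * A$1$2 + c21 * A$2$1 + c22 * A$2$2 = 1"
    using gcd_2[OF g] by blast
  have gen: "c12 * A$1$2 + c21 * pinv (A$1$2) + c22 * A$2$2 = 1" using c a0 he(1) by simp
  have "A$1$2 \<noteq> 0" using dA a0 he(1) by (auto simp: det_2)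
  then obtain x y where "pinv x * A$1$2 * y + pinv y * pinv (A$1$2) * x + pinv y * A$2$2 * y = 1"
    using lemH[OF two _ he(3) gen] by blast
  then have "hq A x y = 1" using a0 he(1) by (simp add: hq_def)
  then show ?thesis by blast
qed

lemma rep:
  fixes A :: "'a::alg_closed_field poly ^ 2 ^ 2"
  assumes two: "(2::'a) \<noteq> 0" and h: "cstar A = A" and dA: "det A \<noteq> 0"
    and g: "gcd_mat_one A"
  shows "\<exists>x y. hq A x y = 1"
proof (cases "A$1$1 = 0")
  case True
  then show ?thesis using rep0[OF assms] by blast
next
  case False
  note he = herm_entries[OF h]
  define a where "a = A$1$1"
  define b where "b = A$1$2"
  define d where "d = A$2$2"
  have dA2: "det A = a * d - b * pinv b" using he(1) by (simp add: det_2 a_def b_def d_def)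
  have "pinv (- det A) = - det A" using he(2,3) by (simp add: dA2 a_def d_def mult.commute)
  then obtain h where hh: "- det A = h * pinv h" using norm_surj[OF two] by blast
  define X0 where "X0 = h - b"
  have "hq A X0 a = a * (h * pinv h + det A)"
    unfolding hq_def X0_def dA2 using he
    by (simp add: a_def b_def d_def algebra_simps)
  moreover have "h * pinv h + det A = 0" by (simp add: hh[symmetric])
  ultimately have hq0: "hq A X0 a = 0" by simp
  have a0: "a \<noteq> 0" using False by (simp add: a_def)
  obtain k u w where k: "k = u * X0 + w * a" "k dvd X0" "k dvd a" "k \<noteq> 0"
    using ideal_gen[of X0 a] a0 by blast
  obtain x' where x': "X0 = k * x'" using k(2) by (elim dvdE)
  obtain y' where y': "a = k * y'" using k(3) by (elim dvdE)
  have e: "k = u * (k * x') + w * (k * y')" using k(1) unfolding x' y' .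
  have "k * (u * x' + w * y') = u * (k * x') + w * (k * y')" by (simp add: algebra_simps)
  also have "\<dots> = k * 1" using e by (metis mult.right_neutral)
  finally have "k * (u * x' + w * y') = k * 1" .
  then have bez: "u * x' + w * y' = 1" using k(4) mult_left_cancel by blast
  have "hq A X0 a = (pinv k * k) * hq A x' y'"
    unfolding x' y' hq_def by (simp add: algebra_simps)
  moreover have "pinv k * k \<noteq> 0" using k(4) by simp
  ultimately have hq0': "hq A x' y' = 0" using hq0 by simp
  define S where "S = mk2 x' (- w) y' u"
  have dS: "det S = 1" using bez by (simp add: S_def det_2 algebra_simps)
  define B where "B = cstar S ** A ** S"
  have B11: "B$1$1 = 0" unfolding B_def congr_11 using hq0' by (simp add: S_def)
  have hB: "cstar B = B" unfolding B_def by (rule herm_congr[OF h])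
  have dB: "det B \<noteq> 0" using dA by (simp add: B_def det_congr[OF dS])
  have gB: "gcd_mat_one B" unfolding B_def by (rule gcd_congr[OF g dS])
  obtain x y where "hq B x y = 1" using rep0[OF two hB dB gB B11] by blast
  then show ?thesis unfolding B_def congr_hq by blast
qed

theorem proposition3p1:
  fixes A :: "'a::alg_closed_field poly ^ 2 ^ 2"
  assumes "(2::'a) \<noteq> 0"
    and "cstar A = A"
    and "det A \<noteq> 0"
    and "gcd_mat_one A"
  shows "\<exists>S :: 'a poly ^ 2 ^ 2. invertible S \<and>
           cstar S ** A ** S = (\<chi> i j. if i = j then (if i = 1 then 1 else det A) else 0)"
proof -
  note he = herm_entries[OF assms(2)]
  obtain x y where xy: "hq A x y = 1" using rep[OF assms] by blast
  define P where "P = A$1$1 * x + A$1$2 * y"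
  define R where "R = A$2$1 * x + A$2$2 * y"
  have "hq A x y = pinv x * P + pinv y * R" by (simp add: hq_def P_def R_def algebra_simps)
  then have "pinv (pinv x * P + pinv y * R) = 1" using xy by simp
  then have PR: "x * pinv P + y * pinv R = 1" by simp
  define S1 where "S1 = mk2 x (- pinv R) y (pinv P)"
  have dS1: "det S1 = 1" using PR by (simp add: S1_def det_2 algebra_simps)
  define B where "B = cstar S1 ** A ** S1"
  have B11: "B$1$1 = 1" unfolding B_def congr_11 using xy by (simp add: S1_def)
  have hB: "cstar B = B" unfolding B_def by (rule herm_congr[OF assms(2)])
  have dB: "det B = det A" unfolding B_def by (rule det_congr[OF dS1])
  define S2 where "S2 = mk2 1 (- B$1$2) 0 (1 :: 'a poly)"
  have dS2: "det S2 = 1" by (simp add: S2_def det_2)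
  define C where "C = cstar S2 ** B ** S2"
  have hC: "cstar C = C" unfolding C_def by (rule herm_congr[OF hB])
  have dC: "det C = det A" unfolding C_def using det_congr[OF dS2] dB by simp
  have C11: "C$1$1 = 1" using B11 by (simp add: C_def S2_def)
  have C12: "C$1$2 = 0" using B11 by (simp add: C_def S2_def)
  have C21: "C$2$1 = 0" using herm_entries(1)[OF hC] C12 by simp
  have C22: "C$2$2 = det A" using dC C11 C12 C21 by (simp add: det_2)
  define S where "S = S1 ** S2"
  have dS: "det S = 1" using dS1 dS2 by (simp add: S_def det_mul)
  have "cstar S ** A ** S = C"
    by (simp add: S_def C_def B_def cstar_mult matrix_mul_assoc)
  also have "\<dots> = (\<chi> i j. if i = j then (if i = 1 then 1 else det A) else 0)"
    using C11 C12 C21 C22 by (simp add: mat2_eq)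
  finally show ?thesis using det1_invertible[OF dS] by blast
qed

end
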